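(* Let $\Lambda$ be a row-finite source-free $k$-graph and let $(X, \mu)$ be a $\sigma$-finite measure space. If a $\Lambda$-projective representation of $C^*(\Lambda)$ on $L^2(X, \mu)$ is monic, then the support of any of its monic vectors $\xi$ differs from $X$ by at most a set of measure $0$.
   Context: A $k$-graph is a countable small category $\Lambda$ with a functor $d:\Lambda\to\mathbb{N}^k$ with unique factorization; row-finite/source-free: the set of paths of each degree with a given range is finite/nonempty. $C^*(\Lambda)$ is the universal $C^*$-algebra of a Cuntz–Krieger $\Lambda$-family. A $\Lambda$-semibranching function system on $(X,\mu)$: measurable $D_\lambda$, prefixing maps $\tau_\lambda:D_\lambda\to X$ with ranges $R_\lambda$, coding maps $\tau^m$ ($m\in\mathbb{N}^k$), such that for each $m$ $\{\tau_\lambda:d(\lambda)=m\}$ is a semibranching function system with coding map $\tau^m$ (finite positive measures, a.e. disjoint ranges covering $X$ a.e., positive Radon–Nikodym derivatives, $\tau^m\circ\tau_\lambda=\mathrm{id}$), $\tau_v=\mathrm{id}$ for vertices, $\tau_\lambda\tau_\nu=\tau_{\lambda\nu}$ a.e., $\tau^m\tau^n=\tau^{m+n}$. A $\Lambda$-projective system adds $f_\lambda\in L^2$ with $0\ne d(\mu\circ\tau_\lambda^{-1})/d\mu=|f_\lambda|^2$ and $f_\lambda(f_\nu\circ\tau^{d(\lambda)})=f_{\lambda\nu}$; the $\Lambda$-projective representation is $T_\lambda f=f_\lambda\cdot(f\circ\tau^{d(\lambda)})$, which satisfies $T_\lambda T_\lambda^*=M_{\chi_{R_\lambda}}$. A representation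 $\{t_\lambda\}$ on $\mathcal H$ is monic if all $t_\lambda\ne0$ and there is $\xi$ (a monic vector) with $\overline{\mathrm{span}}\{t_\lambda t_\lambda^*\xi:\lambda\in\Lambda\}=\mathcal H$. *)

theory Defs
  imports "HOL-Analysis.Analysis"
begin

text \<open>A k-graph: paths P (morphisms of a countable small category; objects are
identified with their identity morphisms), range r, source s, composition c
(c l n is defined when s l = r n), degree functor d into N^k, where N^k is
modelled as 'k \<Rightarrow> nat for a finite index type 'k with CARD('k) = k.\<close>

definition k_graph ::
  "'p set \<Rightarrow> ('p \<Rightarrow> 'p) \<Rightarrow> ('p \<Rightarrow> 'p) \<Rightarrow> ('p \<Rightarrow> 'p \<Rightarrow> 'p) \<Rightarrow> ('p \<Rightarrow> 'k::finite \<Rightarrow> nat) \<Rightarrow> bool"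
  where
  "k_graph P r s c d \<longleftrightarrow>
     countable P \<and>
     (\<forall>l\<in>P. r l \<in> P \<and> s l \<in> P \<and>
        r (r l) = r l \<and> s (r l) = r l \<and> r (s l) = s l \<and> s (s l) = s l \<and>
        d (r l) = (\<lambda>_. 0) \<and> d (s l) = (\<lambda>_. 0) \<and>
        c (r l) l = l \<and> c l (s l) = l) \<and>
     (\<forall>l\<in>P. \<forall>n\<in>P. s l = r n \<longrightarrow>
        c l n \<in> P \<and> r (c l n) = r l \<and> s (c l n) = s n \<and>
        d (c l n) = (\<lambda>i. d l i + d n i)) \<and>
     (\<forall>l\<in>P. \<forall>n\<in>P. \<forall>q\<in>P. s l = r n \<longrightarrow> s n = r q \<longrightarrow>
        c (c l n) q = c l (c n q)) \<and>
     (\<forall>l\<in>P. \<forall>m n. d l = (\<lambda>i. m i + n i) \<longrightarrow>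
        (\<exists>!ab. fst ab \<in> P \<and> snd ab \<in> P \<and> s (fst ab) = r (snd ab) \<and>
               d (fst ab) = m \<and> d (snd ab) = n \<and> c (fst ab) (snd ab) = l))"

definition vertices :: "'p set \<Rightarrow> ('p \<Rightarrow> 'p) \<Rightarrow> 'p set" where
  "vertices P r = r ` P"

definition row_finite :: "'p set \<Rightarrow> ('p \<Rightarrow> 'p) \<Rightarrow> ('p \<Rightarrow> 'k \<Rightarrow> nat) \<Rightarrow> bool" where
  "row_finite P r d \<longleftrightarrow> (\<forall>v\<in>vertices P r. \<forall>m. finite {l\<in>P. r l = v \<and> d l = m})"

definition source_free :: "'p set \<Rightarrow> ('p \<Rightarrow> 'p) \<Rightarrow> ('p \<Rightarrow> 'k \<Rightarrow> nat) \<Rightarrow> bool" where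
  "source_free P r d \<longleftrightarrow> (\<forall>v\<in>vertices P r. \<forall>m. {l\<in>P. r l = v \<and> d l = m} \<noteq> {})"

definition sbfs ::
  "'a measure \<Rightarrow> 'i set \<Rightarrow> ('i \<Rightarrow> 'a set) \<Rightarrow> ('i \<Rightarrow> 'a \<Rightarrow> 'a) \<Rightarrow> ('a \<Rightarrow> 'a) \<Rightarrow> bool"
  where
  "sbfs M I D tau code \<longleftrightarrow>
     countable I \<and> code \<in> measurable M M \<and>
     (\<forall>i\<in>I. D i \<in> sets M \<and> 0 < emeasure M (D i) \<and> emeasure M (D i) < \<infinity> \<and>
        tau i \<in> measurable (restrict_space M (D i)) M \<and>
        (\<exists>\<Phi>::'a \<Rightarrow> ennreal. \<Phi> \<in> borel_measurable M \<and>
           (\<forall>A\<in>sets M. A \<subseteq> D i \<longrightarrow>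
              tau i ` A \<in> sets M \<and>
              emeasure M (tau i ` A) = (\<integral>\<^sup>+ x. \<Phi> x * indicator A x \<partial>M)) \<and>
           (AE x in M. x \<in> D i \<longrightarrow> 0 < \<Phi> x)) \<and>
        (\<forall>x\<in>D i. code (tau i x) = x)) \<and>
     emeasure M (space M - (\<Union>i\<in>I. tau i ` D i)) = 0 \<and>
     (\<forall>i\<in>I. \<forall>j\<in>I. i \<noteq> j \<longrightarrow> emeasure M (tau i ` D i \<inter> tau j ` D j) = 0)"

definition lambda_sbfs ::
  "'a measure \<Rightarrow> 'p set \<Rightarrow> ('p \<Rightarrow> 'p) \<Rightarrow> ('p \<Rightarrow> 'p) \<Rightarrow> ('p \<Rightarrow> 'p \<Rightarrow> 'p) \<Rightarrow> ('p \<Rightarrow> 'k \<Rightarrow> nat)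
   \<Rightarrow> ('p \<Rightarrow> 'a set) \<Rightarrow> ('p \<Rightarrow> 'a \<Rightarrow> 'a) \<Rightarrow> (('k \<Rightarrow> nat) \<Rightarrow> 'a \<Rightarrow> 'a) \<Rightarrow> bool"
  where
  "lambda_sbfs M P r s c d D tau tauc \<longleftrightarrow>
     (\<forall>m. sbfs M {l\<in>P. d l = m} D tau (tauc m)) \<and>
     (\<forall>v\<in>vertices P r. \<forall>x\<in>D v. tau v x = x) \<and>
     (\<forall>l\<in>P. \<forall>n\<in>P. s l = r n \<longrightarrow>
        (AE x in M. (x \<in> D (c l n) \<longleftrightarrow> (x \<in> D n \<and> tau n x \<in> D l)) \<and>
                    (x \<in> D (c l n) \<longrightarrow> tau l (tau n x) = tau (c l n) x))) \<and>
     (\<forall>m n. \<forall>x\<in>space M. tauc m (tauc n x) = tauc (\<lambda>i. m i + n i) x)"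

definition L2 :: "'a measure \<Rightarrow> ('a \<Rightarrow> complex) set" where
  "L2 M = {g. g \<in> borel_measurable M \<and> integrable M (\<lambda>x. (cmod (g x))\<^sup>2)}"

definition l2_inner :: "'a measure \<Rightarrow> ('a \<Rightarrow> complex) \<Rightarrow> ('a \<Rightarrow> complex) \<Rightarrow> complex" where
  "l2_inner M g h = (\<integral>x. g x * cnj (h x) \<partial>M)"

definition l2_norm :: "'a measure \<Rightarrow> ('a \<Rightarrow> complex) \<Rightarrow> real" where
  "l2_norm M g = sqrt (\<integral>x. (cmod (g x))\<^sup>2 \<partial>M)"

text \<open>The Radon-Nikodym derivative of mu o tau_l^{-1} (the measure
A \<mapsto> mu {x \<in> D l. tau l x \<in> A}) with respect to mu equals |f l|^2.\<close>

definition lambda_proj ::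
  "'a measure \<Rightarrow> 'p set \<Rightarrow> ('p \<Rightarrow> 'p) \<Rightarrow> ('p \<Rightarrow> 'p) \<Rightarrow> ('p \<Rightarrow> 'p \<Rightarrow> 'p) \<Rightarrow> ('p \<Rightarrow> 'k \<Rightarrow> nat)
   \<Rightarrow> ('p \<Rightarrow> 'a set) \<Rightarrow> ('p \<Rightarrow> 'a \<Rightarrow> 'a) \<Rightarrow> (('k \<Rightarrow> nat) \<Rightarrow> 'a \<Rightarrow> 'a) \<Rightarrow> ('p \<Rightarrow> 'a \<Rightarrow> complex) \<Rightarrow> bool"
  where
  "lambda_proj M P r s c d D tau tauc f \<longleftrightarrow>
     lambda_sbfs M P r s c d D tau tauc \<and>
     (\<forall>l\<in>P. f l \<in> L2 M \<and>
        (\<forall>A\<in>sets M. emeasure M {x\<in>D l. tau l x \<in> A} =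
                     (\<integral>\<^sup>+ x. ennreal ((cmod (f l x))\<^sup>2) * indicator A x \<partial>M)) \<and>
        \<not> (AE x in M. f l x = 0)) \<and>
     (\<forall>l\<in>P. \<forall>n\<in>P. s l = r n \<longrightarrow>
        (AE x in M. f l x * f n (tauc (d l) x) = f (c l n) x))"

definition proj_rep ::
  "('p \<Rightarrow> 'a \<Rightarrow> complex) \<Rightarrow> (('k \<Rightarrow> nat) \<Rightarrow> 'a \<Rightarrow> 'a) \<Rightarrow> ('p \<Rightarrow> 'k \<Rightarrow> nat) \<Rightarrow> 'p
   \<Rightarrow> ('a \<Rightarrow> complex) \<Rightarrow> ('a \<Rightarrow> complex)" where
  "proj_rep f tauc d l g = (\<lambda>x. f l x * g (tauc (d l) x))"

definition is_adjoint ::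
  "'a measure \<Rightarrow> (('a \<Rightarrow> complex) \<Rightarrow> ('a \<Rightarrow> complex)) \<Rightarrow> (('a \<Rightarrow> complex) \<Rightarrow> ('a \<Rightarrow> complex)) \<Rightarrow> bool"
  where
  "is_adjoint M T S \<longleftrightarrow>
     (\<forall>g\<in>L2 M. T g \<in> L2 M) \<and> (\<forall>g\<in>L2 M. S g \<in> L2 M) \<and>
     (\<forall>g\<in>L2 M. \<forall>h\<in>L2 M. l2_inner M (T g) h = l2_inner M g (S h))"

definition nonzero_op :: "'a measure \<Rightarrow> (('a \<Rightarrow> complex) \<Rightarrow> ('a \<Rightarrow> complex)) \<Rightarrow> bool" where
  "nonzero_op M T \<longleftrightarrow> (\<exists>g\<in>L2 M. \<not> (AE x in M. T g x = 0))"

definition monic_vector ::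
  "'a measure \<Rightarrow> 'p set \<Rightarrow> ('p \<Rightarrow> ('a \<Rightarrow> complex) \<Rightarrow> ('a \<Rightarrow> complex)) \<Rightarrow> ('a \<Rightarrow> complex) \<Rightarrow> bool"
  where
  "monic_vector M P T xi \<longleftrightarrow>
     xi \<in> L2 M \<and>
     (\<exists>S. (\<forall>l\<in>P. is_adjoint M (T l) (S l)) \<and>
        (\<forall>g\<in>L2 M. \<forall>\<epsilon>>0. \<exists>F cf. finite F \<and> F \<subseteq> P \<and>
           l2_norm M (\<lambda>x. g x - (\<Sum>l\<in>F. cf l * T l (S l xi) x)) < \<epsilon>))"

definition monic_rep ::
  "'a measure \<Rightarrow> 'p set \<Rightarrow> ('p \<Rightarrow> ('a \<Rightarrow> complex) \<Rightarrow> ('a \<Rightarrow> complex)) \<Rightarrow> bool" where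
  "monic_rep M P T \<longleftrightarrow> (\<forall>l\<in>P. nonzero_op M (T l)) \<and> (\<exists>xi. monic_vector M P T xi)"

end

theory Submission
  imports Defs
begin


lemma borel_measurable_cnj'[measurable]:
  "f \<in> borel_measurable M \<Longrightarrow> (\<lambda>x. cnj (f x)) \<in> borel_measurable M"
  by (rule borel_measurable_continuous_on[where f=cnj]) (auto intro: continuous_on_id)

lemma L2_meas: "g \<in> L2 M \<Longrightarrow> g \<in> borel_measurable M"
  by (simp add: L2_def)

lemma L2_add:
  assumes "g \<in> L2 M" "h \<in> L2 M" shows "(\<lambda>x. g x + h x) \<in> L2 M"
proof -
  have m: "g \<in> borel_measurable M" "h \<in> borel_measurable M" using assms by (auto simp: L2_def)
  have i: "integrable M (\<lambda>x. 2 * (cmod (g x))\<^sup>2 + 2 * (cmod (h x))\<^sup>2)"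
    using assms by (auto simp: L2_def)
  have b: "(cmod (g x + h x))\<^sup>2 \<le> 2 * (cmod (g x))\<^sup>2 + 2 * (cmod (h x))\<^sup>2" for x
  proof -
    have "cmod (g x + h x) \<le> cmod (g x) + cmod (h x)" by (rule norm_triangle_ineq)
    then have "(cmod (g x + h x))\<^sup>2 \<le> (cmod (g x) + cmod (h x))\<^sup>2"
      by (simp add: power_mono)
    also have "\<dots> \<le> 2 * (cmod (g x))\<^sup>2 + 2 * (cmod (h x))\<^sup>2"
    proof -
      have "0 \<le> (cmod (g x) - cmod (h x))\<^sup>2" by simp
      then show ?thesis by (simp add: power2_eq_square algebra_simps)
    qed
    finally show ?thesis .
  qed
  show ?thesis unfolding L2_def
    apply (intro CollectI conjI)
    using m apply measurable
    apply (rule Bochner_Integration.integrable_bound[OF i])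
    using m apply measurable
    using b by (auto intro!: AE_I2)
qed

lemma L2_cmult:
  assumes "g \<in> L2 M" shows "(\<lambda>x. a * g x) \<in> L2 M"
proof -
  have "integrable M (\<lambda>x. (cmod a)\<^sup>2 * (cmod (g x))\<^sup>2)" using assms by (auto simp: L2_def)
  then show ?thesis using assms by (auto simp: L2_def norm_mult power_mult_distrib)
qed

lemma L2_zero: "(\<lambda>x. 0) \<in> L2 M"
  by (simp add: L2_def)

lemma L2_sum:
  assumes "finite F" "\<And>l. l \<in> F \<Longrightarrow> h l \<in> L2 M"
  shows "(\<lambda>x. \<Sum>l\<in>F. h l x) \<in> L2 M"
  using assms
proof (induction F rule: finite_induct)
  case empty then show ?case by (simp add: L2_zero)
next
  case (insert a F)
  then show ?case using L2_add[of "h a" M "\<lambda>x. \<Sum>l\<in>F. h l x"] by simp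
qed

lemma L2_diff:
  assumes "g \<in> L2 M" "h \<in> L2 M" shows "(\<lambda>x. g x - h x) \<in> L2 M"
  using L2_add[OF assms(1) L2_cmult[OF assms(2), of "-1"]] by simp

lemma L2_indicator:
  assumes "E \<in> sets M" "g \<in> L2 M" shows "(\<lambda>x. indicator E x * g x) \<in> L2 M"
proof -
  have m: "g \<in> borel_measurable M" using assms by (auto simp: L2_def)
  have i: "integrable M (\<lambda>x. (cmod (g x))\<^sup>2)" using assms by (auto simp: L2_def)
  show ?thesis unfolding L2_def
    apply (intro CollectI conjI)
    using m assms(1) apply measurable
    apply (rule Bochner_Integration.integrable_bound[OF i])
    using m assms(1) apply measurable
    by (auto intro!: AE_I2 simp: indicator_def)
qed

lemma l2_inner_sym: "l2_inner M g h = cnj (l2_inner M h g)"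
  unfolding l2_inner_def
  using Bochner_Integration.integral_cnj[of M "\<lambda>x. h x * cnj (g x)"] by (simp add: mult.commute)

lemma sbfs_l:
  assumes "lambda_proj M P r s c d D tau tauc f" "l \<in> P"
  shows "sbfs M {l'\<in>P. d l' = d l} D tau (tauc (d l))"
  using assms unfolding lambda_proj_def lambda_sbfs_def by blast

lemma D_sets:
  assumes "lambda_proj M P r s c d D tau tauc f" "l \<in> P"
  shows "D l \<in> sets M"
  using sbfs_l[OF assms] assms(2) unfolding sbfs_def by blast

lemma code_tau:
  assumes "lambda_proj M P r s c d D tau tauc f" "l \<in> P" "y \<in> D l"
  shows "tauc (d l) (tau l y) = y"
  using sbfs_l[OF assms(1,2)] assms(2,3) unfolding sbfs_def by blast

lemma R_sets:
  assumes "lambda_proj M P r s c d D tau tauc f" "l \<in> P"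
  shows "tau l ` D l \<in> sets M"
  using sbfs_l[OF assms] assms(2) D_sets[OF assms] unfolding sbfs_def by blast

lemma tau_meas:
  assumes "lambda_proj M P r s c d D tau tauc f" "l \<in> P"
  shows "tau l \<in> measurable (restrict_space M (D l)) M"
  using sbfs_l[OF assms] assms(2) unfolding sbfs_def by blast

lemma E_sets:
  assumes "lambda_proj M P r s c d D tau tauc f" "l \<in> P" "Z \<in> sets M"
  shows "{y \<in> D l. tau l y \<in> Z} \<in> sets M"
proof -
  have Ds: "D l \<in> sets M" by (rule D_sets[OF assms(1,2)])
  then have sub: "D l \<subseteq> space M" by (rule sets.sets_into_space)
  have "tau l -` Z \<inter> space (restrict_space M (D l)) \<in> sets (restrict_space M (D l))"
    using measurable_sets[OF tau_meas[OF assms(1,2)] assms(3)] .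
  moreover have "tau l -` Z \<inter> space (restrict_space M (D l)) = {y \<in> D l. tau l y \<in> Z}"
    using sub by (auto simp: space_restrict_space)
  moreover have "D l \<inter> space M \<in> sets M" using Ds sub by (simp add: Int_absorb2)
  ultimately show ?thesis using sets_restrict_space_iff by metis
qed

lemma f_supp:
  assumes "lambda_proj M P r s c d D tau tauc f" "l \<in> P"
  shows "AE x in M. x \<in> tau l ` D l \<or> f l x = 0"
proof -
  let ?R = "tau l ` D l"
  have Rs: "?R \<in> sets M" by (rule R_sets[OF assms])
  have A: "space M - ?R \<in> sets M" using Rs by auto
  have fm: "f l \<in> borel_measurable M" and eq: "emeasure M {x\<in>D l. tau l x \<in> space M - ?R} =
                     (\<integral>\<^sup>+ x. ennreal ((cmod (f l x))\<^sup>2) * indicator (space M - ?R) x \<partial>M)"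
    using assms A unfolding lambda_proj_def L2_def by blast+
  have "{x\<in>D l. tau l x \<in> space M - ?R} = {}" by auto
  then have "(\<integral>\<^sup>+ x. ennreal ((cmod (f l x))\<^sup>2) * indicator (space M - ?R) x \<partial>M) = 0"
    using eq by (metis emeasure_empty)
  then have "AE x in M. ennreal ((cmod (f l x))\<^sup>2) * indicator (space M - ?R) x = 0"
    using fm A by (subst (asm) nn_integral_0_iff_AE) auto
  then show ?thesis
    by (rule AE_mp) (auto intro!: AE_I2 simp: indicator_def)
qed

lemma key_AE:
  assumes "lambda_proj M P r s c d D tau tauc f" "l \<in> P"
  shows "AE x in M. proj_rep f tauc d l (\<lambda>y. indicator {y \<in> D l. tau l y \<in> Z} y * g y) x
       = indicator Z x * proj_rep f tauc d l g x"
  using f_supp[OF assms]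
proof (rule AE_mp, intro AE_I2 impI)
  fix x assume "x \<in> tau l ` D l \<or> f l x = 0"
  then show "proj_rep f tauc d l (\<lambda>y. indicator {y \<in> D l. tau l y \<in> Z} y * g y) x
       = indicator Z x * proj_rep f tauc d l g x"
  proof
    assume "x \<in> tau l ` D l"
    then obtain y where y: "y \<in> D l" "x = tau l y" by auto
    then have "tauc (d l) x = y" using code_tau[OF assms] by simp
    then show ?thesis using y by (simp add: proj_rep_def indicator_def)
  qed (simp add: proj_rep_def)
qed


lemma vanish:
  assumes lp: "lambda_proj M P r s c d D tau tauc f" and l: "l \<in> P"
    and adj: "is_adjoint M (proj_rep f tauc d l) S" and xi: "xi \<in> L2 M"
  shows "AE x in M. xi x = 0 \<longrightarrow> proj_rep f tauc d l (S xi) x = 0"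
proof -
  let ?T = "proj_rep f tauc d l"
  define Z where "Z = {x\<in>space M. xi x = 0}"
  have xim: "xi \<in> borel_measurable M" using xi by (rule L2_meas)
  have Zs: "Z \<in> sets M" unfolding Z_def using xim by measurable
  define E where "E = {y \<in> D l. tau l y \<in> Z}"
  have Es: "E \<in> sets M" unfolding E_def by (rule E_sets[OF lp l Zs])
  have TL: "\<And>g. g \<in> L2 M \<Longrightarrow> ?T g \<in> L2 M" and SL: "\<And>g. g \<in> L2 M \<Longrightarrow> S g \<in> L2 M"
    and ad: "\<And>g h. g \<in> L2 M \<Longrightarrow> h \<in> L2 M \<Longrightarrow> l2_inner M (?T g) h = l2_inner M g (S h)"
    using adj unfolding is_adjoint_def by blast+
  define a where "a = S xi"
  define w where "w = ?T a"
  define b where "b = S w"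
  have aL: "a \<in> L2 M" unfolding a_def using SL xi by blast
  have wL: "w \<in> L2 M" unfolding w_def using TL aL by blast
  have bL: "b \<in> L2 M" unfolding b_def using SL wL by blast
  have paL: "(\<lambda>y. indicator E y * a y) \<in> L2 M" by (rule L2_indicator[OF Es aL])
  have pbL: "(\<lambda>y. indicator E y * b y) \<in> L2 M" by (rule L2_indicator[OF Es bL])
  have TpaL: "?T (\<lambda>y. indicator E y * a y) \<in> L2 M" using TL paL by blast
  have TpbL: "?T (\<lambda>y. indicator E y * b y) \<in> L2 M" using TL pbL by blast
  have TbL: "?T b \<in> L2 M" using TL bL by blast
  have h1: "AE x in M. ?T (\<lambda>y. indicator E y * a y) x = indicator Z x * w x"
    unfolding E_def w_def by (rule key_AE[OF lp l])
  have h2: "AE x in M. ?T (\<lambda>y. indicator E y * b y) x = indicator Z x * ?T b x"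
    unfolding E_def by (rule key_AE[OF lp l])
  have wm[measurable]: "w \<in> borel_measurable M" using wL by (rule L2_meas)
  note Zs[measurable] xim[measurable]
  have [measurable]: "?T (\<lambda>y. indicator E y * a y) \<in> borel_measurable M" using TpaL by (rule L2_meas)
  have [measurable]: "?T (\<lambda>y. indicator E y * b y) \<in> borel_measurable M" using TpbL by (rule L2_meas)
  have [measurable]: "?T b \<in> borel_measurable M" using TbL by (rule L2_meas)
  have "l2_inner M (\<lambda>x. indicator Z x * w x) w = l2_inner M (?T (\<lambda>y. indicator E y * a y)) w"
    unfolding l2_inner_def
    apply (rule integral_cong_AE)
    apply measurable
    using h1 by eventually_elim simp
  also have "\<dots> = l2_inner M (\<lambda>y. indicator E y * a y) b"
    unfolding b_def by (rule ad[OF paL wL])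
  also have "\<dots> = l2_inner M a (\<lambda>y. indicator E y * b y)"
    unfolding l2_inner_def by (rule arg_cong[where f="integral\<^sup>L M"]) (auto simp: indicator_def)
  also have "\<dots> = cnj (l2_inner M (\<lambda>y. indicator E y * b y) (S xi))"
    unfolding a_def by (rule l2_inner_sym)
  also have "\<dots> = cnj (l2_inner M (?T (\<lambda>y. indicator E y * b y)) xi)"
    using ad[OF pbL xi] by simp
  also have "l2_inner M (?T (\<lambda>y. indicator E y * b y)) xi = l2_inner M (\<lambda>x. indicator Z x * ?T b x) xi"
    unfolding l2_inner_def
    apply (rule integral_cong_AE)
    apply measurable
    using h2 by eventually_elim simp
  also have "\<dots> = 0"
    unfolding l2_inner_def
    by (rule trans[OF Bochner_Integration.integral_cong[OF refl, where g="\<lambda>x. 0"]])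
       (auto simp: Z_def indicator_def)
  finally have i0: "l2_inner M (\<lambda>x. indicator Z x * w x) w = 0" by simp
  have "l2_inner M (\<lambda>x. indicator Z x * w x) w = complex_of_real (\<integral>x. indicator Z x * (cmod (w x))\<^sup>2 \<partial>M)"
    unfolding l2_inner_def integral_complex_of_real[symmetric]
    apply (rule arg_cong[where f="integral\<^sup>L M"])
    apply (rule ext)
    subgoal for x using complex_norm_square[of "w x"] by (simp add: indicator_def mult.assoc)
    done
  with i0 have r0: "(\<integral>x. indicator Z x * (cmod (w x))\<^sup>2 \<partial>M) = 0" by simp
  have wi: "integrable M (\<lambda>x. (cmod (w x))\<^sup>2)" using wL by (simp add: L2_def)
  have ii: "integrable M (\<lambda>x. indicator Z x * (cmod (w x))\<^sup>2)"
    using integrable_mult_indicator[OF Zs wi] by simp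
  have "AE x in M. indicator Z x * (cmod (w x))\<^sup>2 = 0"
    using r0 integral_nonneg_eq_0_iff_AE[OF ii] by (simp add: indicator_def)
  then show ?thesis
    by (rule AE_mp) (auto intro!: AE_I2 simp: Z_def w_def a_def indicator_def)
qed


lemma small_piece:
  assumes lp: "lambda_proj M P r s c d D tau tauc f"
    and mv: "monic_vector M P (proj_rep f tauc d) xi"
    and Bs: "B \<in> sets M" and Bf: "emeasure M B \<noteq> \<infinity>"
  shows "emeasure M ({x\<in>space M. xi x = 0} \<inter> B) = 0"
proof -
  define Z where "Z = {x\<in>space M. xi x = 0}"
  obtain S where xi: "xi \<in> L2 M" and adj: "\<forall>l\<in>P. is_adjoint M (proj_rep f tauc d l) (S l)"
    and app: "\<forall>g\<in>L2 M. \<forall>\<epsilon>>0. \<exists>F cf. finite F \<and> F \<subseteq> P \<and>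
           l2_norm M (\<lambda>x. g x - (\<Sum>l\<in>F. cf l * proj_rep f tauc d l (S l xi) x)) < \<epsilon>"
    using mv unfolding monic_vector_def by blast
  have xim[measurable]: "xi \<in> borel_measurable M" using xi by (rule L2_meas)
  have Zs[measurable]: "Z \<in> sets M" unfolding Z_def by measurable
  have ZBs[measurable]: "Z \<inter> B \<in> sets M" using Zs Bs by auto
  have ZBf: "emeasure M (Z \<inter> B) \<noteq> \<infinity>"
    using emeasure_mono[of "Z \<inter> B" B M] Bs Bf by (auto simp: top_unique)
  have ZBf': "emeasure M (Z \<inter> B) < \<infinity>" using ZBf by (simp add: less_top)
  have wL: "\<And>l. l \<in> P \<Longrightarrow> proj_rep f tauc d l (S l xi) \<in> L2 M"
    using adj xi unfolding is_adjoint_def by blast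
  have van: "\<And>l. l \<in> P \<Longrightarrow> AE x in M. xi x = 0 \<longrightarrow> proj_rep f tauc d l (S l xi) x = 0"
    using vanish[OF lp] adj xi by blast
  define g where "g = (\<lambda>x. complex_of_real (indicator (Z \<inter> B) x))"
  have gsq: "\<And>x. (cmod (g x))\<^sup>2 = indicator (Z \<inter> B) x" by (simp add: g_def indicator_def)
  have gsq': "(\<lambda>x. (cmod (g x))\<^sup>2) = indicator (Z \<inter> B)" using gsq by auto
  have gm: "g \<in> borel_measurable M" unfolding g_def by measurable
  have gL: "g \<in> L2 M" unfolding L2_def
    using gm integrable_real_indicator[OF ZBs ZBf'] gsq' by simp
  have bound: "measure M (Z \<inter> B) < e\<^sup>2" if e: "e > 0" for e
  proof -
    obtain F cf where F: "finite F" "F \<subseteq> P" and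
      nrm: "l2_norm M (\<lambda>x. g x - (\<Sum>l\<in>F. cf l * proj_rep f tauc d l (S l xi) x)) < e"
      using app gL e by blast
    define p where "p = (\<lambda>x. \<Sum>l\<in>F. cf l * proj_rep f tauc d l (S l xi) x)"
    have pL: "p \<in> L2 M" unfolding p_def
      by (rule L2_sum[OF F(1)]) (rule L2_cmult, use wL F(2) in blast)
    define q where "q = (\<lambda>x. g x - p x)"
    have qL: "q \<in> L2 M" unfolding q_def by (rule L2_diff[OF gL pL])
    have qm[measurable]: "q \<in> borel_measurable M" using qL by (rule L2_meas)
    have qi: "integrable M (\<lambda>x. (cmod (q x))\<^sup>2)" using qL by (simp add: L2_def)
    have nq: "sqrt (\<integral>x. (cmod (q x))\<^sup>2 \<partial>M) < e" using nrm unfolding l2_norm_def q_def p_def .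
    have "(\<integral>x. (cmod (q x))\<^sup>2 \<partial>M) < e\<^sup>2"
    proof -
      have "0 \<le> (\<integral>x. (cmod (q x))\<^sup>2 \<partial>M)" by (rule integral_nonneg_AE) auto
      then show ?thesis using nq e by (metis real_sqrt_less_iff real_sqrt_pow2 real_sqrt_abs abs_of_pos power2_less_imp_less real_less_lsqrt less_imp_le)
    qed
    moreover have "(\<integral>x. indicator Z x * (cmod (q x))\<^sup>2 \<partial>M) \<le> (\<integral>x. (cmod (q x))\<^sup>2 \<partial>M)"
      apply (rule integral_mono)
      using integrable_mult_indicator[OF Zs qi] apply simp
       apply (rule qi)
      by (simp add: indicator_def)
    moreover have "(\<integral>x. indicator Z x * (cmod (q x))\<^sup>2 \<partial>M) = (\<integral>x. indicator (Z \<inter> B) x \<partial>M)"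
    proof (rule integral_cong_AE)
      show "(\<lambda>x. indicator Z x * (cmod (q x))\<^sup>2) \<in> borel_measurable M" by measurable
      show "(\<lambda>x. indicator (Z \<inter> B) x :: real) \<in> borel_measurable M" by measurable
      have "AE x in M. \<forall>l\<in>F. xi x = 0 \<longrightarrow> proj_rep f tauc d l (S l xi) x = 0"
        using van F by (subst AE_finite_all[OF F(1)]) blast
      then show "AE x in M. indicator Z x * (cmod (q x))\<^sup>2 = indicator (Z \<inter> B) x"
      proof eventually_elim
        case (elim x)
        show ?case
        proof (cases "x \<in> Z")
          case True
          then have "p x = 0" using elim unfolding p_def Z_def by simp
          then show ?thesis using True gsq[of x] by (simp add: q_def)
        qed (simp add: indicator_def)
      qed
    qed
    moreover have "(\<integral>x. indicator (Z \<inter> B) x \<partial>M) = measure M (Z \<inter> B)"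
      using Bochner_Integration.integral_indicator[of M "Z \<inter> B"] sets.sets_into_space[OF ZBs]
      by (simp add: Int_absorb2)
    ultimately show ?thesis by simp
  qed
  have "measure M (Z \<inter> B) = 0"
  proof (rule ccontr)
    assume "measure M (Z \<inter> B) \<noteq> 0"
    then have pos: "measure M (Z \<inter> B) > 0" using measure_nonneg[of M "Z \<inter> B"] by linarith
    have "measure M (Z \<inter> B) < (sqrt (measure M (Z \<inter> B)))\<^sup>2"
      using bound[of "sqrt (measure M (Z \<inter> B))"] pos by simp
    then show False using pos by simp
  qed
  then show ?thesis unfolding Z_def[symmetric] using emeasure_eq_ennreal_measure[of M "Z \<inter> B"] ZBf by simp
qed

lemma final:
  assumes "sigma_finite_measure M"
    and lp: "lambda_proj M P r s c d D tau tauc f"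
    and mv: "monic_vector M P (proj_rep f tauc d) xi"
  shows "emeasure M {x \<in> space M. xi x = 0} = 0"
proof -
  define Z where "Z = {x\<in>space M. xi x = 0}"
  have xim[measurable]: "xi \<in> borel_measurable M"
    using mv unfolding monic_vector_def L2_def by blast
  have Zs: "Z \<in> sets M" unfolding Z_def by measurable
  interpret sigma_finite_measure M by fact
  obtain A :: "nat \<Rightarrow> 'a set" where A: "range A \<subseteq> sets M" "(\<Union>i. A i) = space M"
    "\<And>i. emeasure M (A i) \<noteq> \<infinity>" using sigma_finite_measure.sigma_finite[OF assms(1)] by metis
  have AEi: "AE x in M. x \<notin> Z \<inter> A i" for i
  proof -
    have "emeasure M (Z \<inter> A i) = 0" unfolding Z_def
      using small_piece[OF lp mv, of "A i"] A by auto
    moreover have "{x\<in>space M. \<not> x \<notin> Z \<inter> A i} = Z \<inter> A i" using Zs sets.sets_into_space by auto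
    ultimately show ?thesis using AE_iff_measurable[of "Z \<inter> A i" M "\<lambda>x. x \<notin> Z \<inter> A i"] Zs A(1) by auto
  qed
  have "AE x in M. \<forall>i. x \<notin> Z \<inter> A i"
    using AE_all_countable[of "\<lambda>i x. x \<notin> Z \<inter> A i" M] AEi by blast
  then have "AE x in M. x \<notin> Z"
    by (rule AE_mp) (intro AE_I2, use A(2) in blast)
  moreover have "{x\<in>space M. \<not> x \<notin> Z} = Z" using Zs sets.sets_into_space by auto
  ultimately show ?thesis unfolding Z_def[symmetric] using AE_iff_measurable[of Z M "\<lambda>x. x \<notin> Z"] Zs by auto
qed


theorem proposition3p5:
  fixes P :: "'p set" and r s :: "'p \<Rightarrow> 'p" and c :: "'p \<Rightarrow> 'p \<Rightarrow> 'p"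
    and d :: "'p \<Rightarrow> 'k::finite \<Rightarrow> nat"
    and M :: "'a measure" and D :: "'p \<Rightarrow> 'a set" and tau :: "'p \<Rightarrow> 'a \<Rightarrow> 'a"
    and tauc :: "('k \<Rightarrow> nat) \<Rightarrow> 'a \<Rightarrow> 'a" and f :: "'p \<Rightarrow> 'a \<Rightarrow> complex"
    and xi :: "'a \<Rightarrow> complex"
  assumes "k_graph P r s c d"
    and "row_finite P r d"
    and "source_free P r d"
    and "sigma_finite_measure M"
    and "lambda_proj M P r s c d D tau tauc f"
    and "monic_rep M P (proj_rep f tauc d)"
    and "monic_vector M P (proj_rep f tauc d) xi"
  shows "emeasure M {x \<in> space M. xi x = 0} = 0"
  by (rule final[OF assms(4,5,7)])

end
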